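(* The Minimax SCC $M$ coincides with the Copeland SCC $Cop$ (as functions on $\mathcal P$) if and only if $n=2$ or $(h,n)=(3,3)$.
   Context: Let $n,h\ge2$, $N=\{1,\dots,n\}$, $H=\{1,\dots,h\}$; $\mathcal P$ is the set of $h$-tuples $p$ of linear orders on $N$; $x>_{p_i}y$ means $x\neq y$ and $p_i$ ranks $x$ above $y$. Let $\mu_0=\lceil(h+1)/2\rceil$ and $x>^p_{\mu_0}y$ mean $|\{i: x>_{p_i}y\}|\ge\mu_0$. $M(p)=\mathrm{argmin}_{x\in N}\max_{y\neq x}|\{i: y>_{p_i}x\}|$ and $Cop(p)=\mathrm{argmax}_{x\in N}\big(|\{y: x>^p_{\mu_0}y\}|-|\{y: y>^p_{\mu_0}x\}|\big)$. *)

theory Defs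
  imports Complex_Main
begin

text \<open>A linear order on N = {1..n} is a relation R with (x,y) in R meaning
 "x is ranked at or above y".  A profile assigns to each individual i in {1..h}
 a linear order on {1..n}.\<close>

definition profiles :: "nat \<Rightarrow> nat \<Rightarrow> (nat \<Rightarrow> nat rel) set" where
  "profiles n h = {p. \<forall>i\<in>{1..h}. linear_order_on {1..n} (p i)}"

definition prefers :: "(nat \<Rightarrow> nat rel) \<Rightarrow> nat \<Rightarrow> nat \<Rightarrow> nat \<Rightarrow> bool" where
  "prefers p i x y \<longleftrightarrow> x \<noteq> y \<and> (x, y) \<in> p i"

definition votes :: "nat \<Rightarrow> (nat \<Rightarrow> nat rel) \<Rightarrow> nat \<Rightarrow> nat \<Rightarrow> nat" where
  "votes h p x y = card {i\<in>{1..h}. prefers p i x y}"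

definition mu0 :: "nat \<Rightarrow> nat" where
  "mu0 h = nat \<lceil>(real h + 1) / 2\<rceil>"

definition maj :: "nat \<Rightarrow> (nat \<Rightarrow> nat rel) \<Rightarrow> nat \<Rightarrow> nat \<Rightarrow> bool" where
  "maj h p x y \<longleftrightarrow> votes h p x y \<ge> mu0 h"

definition minimax_score :: "nat \<Rightarrow> nat \<Rightarrow> (nat \<Rightarrow> nat rel) \<Rightarrow> nat \<Rightarrow> nat" where
  "minimax_score n h p x = Max {votes h p y x | y. y \<in> {1..n} \<and> y \<noteq> x}"

definition Minimax :: "nat \<Rightarrow> nat \<Rightarrow> (nat \<Rightarrow> nat rel) \<Rightarrow> nat set" where
  "Minimax n h p = {x\<in>{1..n}. \<forall>z\<in>{1..n}. minimax_score n h p x \<le> minimax_score n h p z}"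

definition copeland_score :: "nat \<Rightarrow> nat \<Rightarrow> (nat \<Rightarrow> nat rel) \<Rightarrow> nat \<Rightarrow> int" where
  "copeland_score n h p x =
     int (card {y\<in>{1..n}. maj h p x y}) - int (card {y\<in>{1..n}. maj h p y x})"

definition Copeland :: "nat \<Rightarrow> nat \<Rightarrow> (nat \<Rightarrow> nat rel) \<Rightarrow> nat set" where
  "Copeland n h p = {x\<in>{1..n}. \<forall>z\<in>{1..n}. copeland_score n h p z \<le> copeland_score n h p x}"

end

theory Submission
  imports Defs
begin

lemma card3:
  fixes k m h :: nat
  assumes "k \<le> m" "m \<le> h"
  shows "card {i\<in>{1..h}. (i \<le> k \<and> a) \<or> (k < i \<and> i \<le> m \<and> b) \<or> (m < i \<and> c)}
       = (if a then k else 0) + (if b then m - k else 0) + (if c then h - m else 0)"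
proof -
  have e: "{i\<in>{1..h}. (i \<le> k \<and> a) \<or> (k < i \<and> i \<le> m \<and> b) \<or> (m < i \<and> c)}
     = ((if a then {1..k} else {}) \<union> (if b then {k+1..m} else {})) \<union> (if c then {m+1..h} else {})"
    using assms by auto
  have c1: "card ((if a then {1..k} else {}) \<union> (if b then {k+1..m} else {})) =
     card (if a then {1..k} else {}) + card (if b then {k+1..m} else {})"
    by (rule card_Un_disjoint) auto
  have c2: "card (((if a then {1..k} else {}) \<union> (if b then {k+1..m} else {})) \<union> (if c then {m+1..h} else {})) =
     card ((if a then {1..k} else {}) \<union> (if b then {k+1..m} else {})) + card (if c then {m+1..h} else {})"
    by (rule card_Un_disjoint) (use assms in auto)
  show ?thesis unfolding e c2 c1 by simp
qed

definition prof :: "nat \<Rightarrow> (nat \<Rightarrow> nat \<Rightarrow> nat) \<Rightarrow> (nat \<Rightarrow> nat rel)" where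
  "prof n r = (\<lambda>i. {(x,y). x\<in>{1..n} \<and> y\<in>{1..n} \<and> r i x \<le> r i y})"

lemma prof_in:
  assumes "\<forall>i. inj (r i)"
  shows "prof n r \<in> profiles n h"
  unfolding profiles_def prof_def linear_order_on_def partial_order_on_def preorder_on_def
    refl_on_def trans_def antisym_def total_on_def
  using assms by (auto simp: inj_eq)

lemma prefers_prof:
  assumes "inj (r i)"
  shows "prefers (prof n r) i x y \<longleftrightarrow> x\<in>{1..n} \<and> y\<in>{1..n} \<and> r i x < r i y"
  using assms unfolding prefers_def prof_def by (auto dest: injD simp: order_le_less)

definition R :: "nat \<Rightarrow> nat \<Rightarrow> (nat \<Rightarrow> nat) \<Rightarrow> (nat \<Rightarrow> nat) \<Rightarrow> (nat \<Rightarrow> nat) \<Rightarrow> nat \<Rightarrow> nat \<Rightarrow> nat" where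
  "R k m a b c = (\<lambda>i. if i \<le> k then a else if i \<le> m then b else c)"

lemma R_inj: "inj a \<Longrightarrow> inj b \<Longrightarrow> inj c \<Longrightarrow> \<forall>i. inj (R k m a b c i)"
  unfolding R_def by auto

lemma votes_R:
  assumes "inj a" "inj b" "inj c" "k \<le> m" "m \<le> h" "x\<in>{1..n}" "y\<in>{1..n}"
  shows "votes h (prof n (R k m a b c)) x y =
    (if a x < a y then k else 0) + (if b x < b y then m-k else 0) + (if c x < c y then h-m else 0)"
proof -
  have "{i\<in>{1..h}. prefers (prof n (R k m a b c)) i x y} =
     {i\<in>{1..h}. (i \<le> k \<and> a x < a y) \<or> (k < i \<and> i \<le> m \<and> b x < b y) \<or> (m < i \<and> c x < c y)}"
    using assms R_inj[OF assms(1-3), of k m] by (auto simp: prefers_prof R_def split: if_splits)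
  then show ?thesis unfolding votes_def using card3[OF assms(4,5)] by simp
qed

lemma mu0_eq: "mu0 h = h div 2 + 1"
proof -
  have hm: "h = 2 * (h div 2) + h mod 2" by simp
  have r: "real h = 2 * real (h div 2) + real (h mod 2)"
  proof -
    have "real h = real (2 * (h div 2) + h mod 2)" using hm by (rule arg_cong)
    then show ?thesis by (metis of_nat_add of_nat_mult of_nat_numeral)
  qed
  have m: "h mod 2 = 0 \<or> h mod 2 = 1" by auto
  have "\<lceil>(real h + 1) / 2\<rceil> = int (h div 2 + 1)"
  proof (rule ceiling_unique)
    show "real_of_int (int (h div 2 + 1)) - 1 < (real h + 1) / 2"
      using r m by auto
    show "(real h + 1) / 2 \<le> real_of_int (int (h div 2 + 1))" using r m by auto
  qed
  then show ?thesis unfolding mu0_def by simp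
qed

lemma prof_lin: "p \<in> profiles n h \<Longrightarrow> i \<in> {1..h} \<Longrightarrow> linear_order_on {1..n} (p i)"
  unfolding profiles_def by auto

lemma votes_le: "votes h p x y \<le> h"
proof -
  have "votes h p x y \<le> card {1..h}" unfolding votes_def by (rule card_mono) auto
  then show ?thesis by simp
qed

lemma votes_self: "votes h p x x = 0"
  unfolding votes_def prefers_def by simp

lemma votes_sum:
  assumes p: "p \<in> profiles n h" and x: "x \<in> {1..n}" and y: "y \<in> {1..n}" and xy: "x \<noteq> y"
  shows "votes h p x y + votes h p y x = h"
proof -
  let ?A = "{i\<in>{1..h}. prefers p i x y}" and ?B = "{i\<in>{1..h}. prefers p i y x}"
  have "?A \<union> ?B = {1..h}"
  proof (intro equalityI subsetI)
    fix i assume "i \<in> ?A \<union> ?B" then show "i \<in> {1..h}" by auto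
  next
    fix i assume "i \<in> {1..h}"
    show "i \<in> ?A \<union> ?B"
    proof (cases "prefers p i y x")
      case True then show ?thesis using \<open>i \<in> {1..h}\<close> by auto
    next
      case False
    then have i: "1 \<le> i" "i \<le> h" "\<not> prefers p i y x" using \<open>i \<in> {1..h}\<close> by auto
    then have "linear_order_on {1..n} (p i)" using prof_lin[OF p] by auto
    then have "total_on {1..n} (p i)" unfolding linear_order_on_def by auto
    then have "prefers p i x y" using i x y xy unfolding total_on_def prefers_def by blast
    then show ?thesis using i by auto
    qed
  qed
  moreover have "?A \<inter> ?B = {}"
  proof (rule equals0I)
    fix i assume "i \<in> ?A \<inter> ?B"
    then have i: "1 \<le> i" "i \<le> h" "prefers p i x y" "prefers p i y x" by auto
    then have "linear_order_on {1..n} (p i)" using prof_lin[OF p] by auto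
    then have "antisym (p i)" unfolding linear_order_on_def partial_order_on_def by auto
    then show False using i unfolding antisym_def prefers_def by auto
  qed
  ultimately have "card ?A + card ?B = card {1..h}"
    by (metis card_Un_disjoint finite_Un finite_atLeastAtMost)
  then show ?thesis unfolding votes_def by simp
qed

lemma votes_trans:
  assumes p: "p \<in> profiles n h" and x: "x \<in> {1..n}" and y: "y \<in> {1..n}" and z: "z \<in> {1..n}"
    and xz: "x \<noteq> z"
  shows "votes h p x y + votes h p y z \<le> h + votes h p x z"
proof -
  let ?A = "{i\<in>{1..h}. prefers p i x y}" and ?B = "{i\<in>{1..h}. prefers p i y z}"
    and ?C = "{i\<in>{1..h}. prefers p i x z}"
  have "?A \<inter> ?B \<subseteq> ?C"
  proof (intro subsetI)
    fix i assume "i \<in> ?A \<inter> ?B"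
    then have i: "1 \<le> i" "i \<le> h" "prefers p i x y" "prefers p i y z" by auto
    then have "linear_order_on {1..n} (p i)" using prof_lin[OF p] by auto
    then have "trans (p i)" unfolding linear_order_on_def partial_order_on_def preorder_on_def by auto
    then show "i \<in> ?C" using i xz unfolding trans_def prefers_def by auto
  qed
  then have c1: "card (?A \<inter> ?B) \<le> card ?C" by (intro card_mono) auto
  have c2: "card (?A \<union> ?B) \<le> h"
  proof -
    have "card (?A \<union> ?B) \<le> card {1..h}" by (rule card_mono) auto
    then show ?thesis by simp
  qed
  have "card (?A \<union> ?B) + card (?A \<inter> ?B) = card ?A + card ?B" using card_Un_Int[of ?A ?B] by simp
  then show ?thesis using c1 c2 unfolding votes_def by linarith
qed

lemma maj_irrefl: "\<not> maj h p x x"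
  unfolding maj_def mu0_eq votes_self by simp

lemma maj_asym:
  assumes p: "p \<in> profiles n h" and x: "x \<in> {1..n}" and y: "y \<in> {1..n}" and "maj h p x y"
  shows "\<not> maj h p y x"
proof (cases "x = y")
  case True then show ?thesis using maj_irrefl by simp
next
  case False
  then show ?thesis using votes_sum[OF p x y False] assms(4) unfolding maj_def mu0_eq by linarith
qed

lemma mm_upper:
  assumes "x \<in> {1..n}" "n \<ge> 2" "\<And>y. y \<in> {1..n} \<Longrightarrow> y \<noteq> x \<Longrightarrow> votes h p y x \<le> B"
  shows "minimax_score n h p x \<le> B"
proof -
  have fin: "finite {votes h p y x | y. y \<in> {1..n} \<and> y \<noteq> x}" by simp
  obtain y where y: "y \<in> {1..n}" "y \<noteq> x"
  proof (cases "x = 1")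
    case True then show ?thesis using that[of 2] assms by auto
  next
    case False then show ?thesis using that[of 1] assms by auto
  qed
  then have ne: "{votes h p y x | y. y \<in> {1..n} \<and> y \<noteq> x} \<noteq> {}" by blast
  show ?thesis unfolding minimax_score_def using Max_le_iff[OF fin ne] assms(3) by auto
qed

lemma mm_lower:
  assumes "y \<in> {1..n}" "y \<noteq> x"
  shows "votes h p y x \<le> minimax_score n h p x"
  unfolding minimax_score_def by (rule Max_ge) (use assms in auto)

lemma cop_upper:
  assumes p: "p \<in> profiles n h" and z: "z \<in> {1..n}"
    and A: "A \<subseteq> {1..n}" and T: "T \<subseteq> {1..n}" and AT: "A \<inter> T = {}" and zA: "z \<notin> A" and zT: "z \<notin> T"
    and hA: "\<And>a. a \<in> A \<Longrightarrow> maj h p a z" and hT: "\<And>t. t \<in> T \<Longrightarrow> \<not> maj h p z t"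
  shows "copeland_score n h p z \<le> int n - 1 - int (card T) - 2 * int (card A)"
proof -
  have fA: "finite A" using A finite_subset by blast
  have fT: "finite T" using T finite_subset by blast
  have W: "{y\<in>{1..n}. maj h p z y} \<subseteq> {1..n} - ({z} \<union> A \<union> T)"
  proof (intro subsetI)
    fix y assume y: "y \<in> {y\<in>{1..n}. maj h p z y}"
    have "y \<notin> A"
    proof
      assume "y \<in> A"
      then have "maj h p y z" "y \<in> {1..n}" using hA A by auto
      then show False using maj_asym[OF p _ z] y by blast
    qed
    moreover have "y \<notin> T" using hT y by auto
    moreover have "y \<noteq> z" using y maj_irrefl by auto
    ultimately show "y \<in> {1..n} - ({z} \<union> A \<union> T)" using y by auto
  qed
  have "card {y\<in>{1..n}. maj h p z y} \<le> card ({1..n} - ({z} \<union> A \<union> T))"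
    by (rule card_mono[OF _ W]) simp
  also have "\<dots> = n - card ({z} \<union> A \<union> T)"
    using z A T by (subst card_Diff_subset) (auto simp: fA fT)
  also have "card ({z} \<union> A \<union> T) = 1 + card A + card T"
    using zA zT AT fA fT by (simp add: card_Un_disjoint)
  finally have w: "card {y\<in>{1..n}. maj h p z y} \<le> n - (1 + card A + card T)" .
  have "card ({z} \<union> A \<union> T) \<le> card {1..n}" by (rule card_mono) (use z A T in auto)
  then have le: "1 + card A + card T \<le> n" using zA zT AT fA fT by (simp add: card_Un_disjoint)
  have "card A \<le> card {y\<in>{1..n}. maj h p y z}" by (rule card_mono) (use A hA in auto)
  then show ?thesis unfolding copeland_score_def using w le by linarith
qed

lemma cop_lower:
  assumes p: "p \<in> profiles n h" and z: "z \<in> {1..n}"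
    and B: "B \<subseteq> {1..n}" and D: "D \<subseteq> B" and zB: "z \<notin> B"
    and hW: "\<And>y. y \<in> {1..n} \<Longrightarrow> y \<noteq> z \<Longrightarrow> y \<notin> B \<Longrightarrow> maj h p z y"
    and hD: "\<And>y. y \<in> B \<Longrightarrow> y \<notin> D \<Longrightarrow> \<not> maj h p y z"
  shows "copeland_score n h p z \<ge> int n - 1 - int (card B) - int (card D)"
proof -
  have fB: "finite B" using B finite_subset by blast
  have "{1..n} - ({z} \<union> B) \<subseteq> {y\<in>{1..n}. maj h p z y}" using hW by auto
  then have "card ({1..n} - ({z} \<union> B)) \<le> card {y\<in>{1..n}. maj h p z y}" by (intro card_mono) auto
  moreover have "card ({1..n} - ({z} \<union> B)) = n - (1 + card B)"
    using z B zB fB by (subst card_Diff_subset) auto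
  moreover have "{y\<in>{1..n}. maj h p y z} \<subseteq> D"
  proof
    fix y assume y: "y \<in> {y\<in>{1..n}. maj h p y z}"
    show "y \<in> D"
    proof (rule ccontr)
      assume "y \<notin> D"
      show False
      proof (cases "y \<in> B")
        case True then show False using hD \<open>y \<notin> D\<close> y by auto
      next
        case False
        then have "y \<noteq> z" using y maj_irrefl by auto
        then have "maj h p z y" using hW False y by auto
        then show False using maj_asym[OF p z] y by auto
      qed
    qed
  qed
  then have "card {y\<in>{1..n}. maj h p y z} \<le> card D" by (intro card_mono) (use D fB finite_subset in auto)
  ultimately show ?thesis unfolding copeland_score_def by linarith
qed

lemma set2: "{1..2::nat} = {1,2}" by auto
lemma set3: "{1..3::nat} = {1,2,3}" by auto

lemma card_upto3: "card {y\<in>{1..3::nat}. P y} = (if P 1 then 1 else 0) + (if P 2 then 1 else 0) + (if P 3 then 1 else 0)"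
proof -
  have "{y\<in>{1..3::nat}. P y} = (if P 1 then {1} else {}) \<union> (if P 2 then {2} else {}) \<union> (if P 3 then {3} else {})"
    unfolding set3 by auto
  then show ?thesis by (cases "P 1"; cases "P 2"; cases "P 3") simp_all
qed

lemma card_upto2: "card {y\<in>{1..2::nat}. P y} = (if P 1 then 1 else 0) + (if P 2 then 1 else 0)"
proof -
  have "{y\<in>{1..2::nat}. P y} = (if P 1 then {1} else {}) \<union> (if P 2 then {2} else {})"
    unfolding set2 by auto
  then show ?thesis by (cases "P 1"; cases "P 2") simp_all
qed


lemma case_n2:
  assumes p: "p \<in> profiles 2 h"
  shows "Minimax 2 h p = Copeland 2 h p"
proof -
  have s: "votes h p 1 2 + votes h p 2 1 = h" using votes_sum[OF p, of 1 2] by simp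
  have ms1: "minimax_score 2 h p 1 = votes h p 2 1"
  proof -
    have "{votes h p y 1 | y. y \<in> {1..2} \<and> y \<noteq> 1} = {votes h p 2 1}" unfolding set2 by auto
    then show ?thesis unfolding minimax_score_def by simp
  qed
  have ms2: "minimax_score 2 h p 2 = votes h p 1 2"
  proof -
    have "{votes h p y 2 | y. y \<in> {1..2} \<and> y \<noteq> 2} = {votes h p 1 2}" unfolding set2 by auto
    then show ?thesis unfolding minimax_score_def by simp
  qed
  have cs: "copeland_score 2 h p x = (if maj h p x 1 then 1 else 0) + (if maj h p x 2 then 1 else 0)
     - (if maj h p 1 x then 1 else 0) - (if maj h p 2 x then 1 else 0)" for x
    unfolding copeland_score_def card_upto2 by simp
  have c1: "copeland_score 2 h p 1 = (if maj h p 1 2 then 1 else 0) - (if maj h p 2 1 then 1 else 0)"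
    unfolding cs by (simp add: maj_irrefl)
  have c2: "copeland_score 2 h p 2 = (if maj h p 2 1 then 1 else 0) - (if maj h p 1 2 then 1 else 0)"
    unfolding cs by (simp add: maj_irrefl)
  have M: "Minimax 2 h p = {x\<in>{1,2}. minimax_score 2 h p x \<le> minimax_score 2 h p 1 \<and> minimax_score 2 h p x \<le> minimax_score 2 h p 2}"
    unfolding Minimax_def set2 by auto
  have C: "Copeland 2 h p = {x\<in>{1,2}. copeland_score 2 h p 1 \<le> copeland_score 2 h p x \<and> copeland_score 2 h p 2 \<le> copeland_score 2 h p x}"
    unfolding Copeland_def set2 by auto
  have m12: "maj h p 1 2 \<longleftrightarrow> votes h p 1 2 \<ge> h div 2 + 1" unfolding maj_def mu0_eq ..
  have m21: "maj h p 2 1 \<longleftrightarrow> votes h p 2 1 \<ge> h div 2 + 1" unfolding maj_def mu0_eq ..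
  have d: "2*(h div 2) \<le> h" "h \<le> 2*(h div 2)+1" by auto
  have e1: "votes h p 2 1 \<le> votes h p 1 2 \<longleftrightarrow> (copeland_score 2 h p 2 \<le> copeland_score 2 h p 1)"
    unfolding c1 c2 m12 m21 using s d by (simp split: if_splits; linarith)
  have e2: "votes h p 1 2 \<le> votes h p 2 1 \<longleftrightarrow> (copeland_score 2 h p 1 \<le> copeland_score 2 h p 2)"
    unfolding c1 c2 m12 m21 using s d by (simp split: if_splits; linarith)
  have f1: "(minimax_score 2 h p 1 \<le> minimax_score 2 h p 2) = (copeland_score 2 h p 2 \<le> copeland_score 2 h p 1)"
    unfolding ms1 ms2 using e1 by simp
  have f2: "(minimax_score 2 h p 2 \<le> minimax_score 2 h p 1) = (copeland_score 2 h p 1 \<le> copeland_score 2 h p 2)"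
    unfolding ms1 ms2 using e2 by simp
  show ?thesis unfolding M C using f1 f2 by auto
qed

lemma arith33:
  fixes a b c :: nat
  assumes "a \<le> 3" "b \<le> 3" "c \<le> 3"
    "a + c \<le> 3 + b" "b + (3-c) \<le> 3 + a" "(3-a) + b \<le> 3 + c" "c + (3-b) \<le> 3 + (3-a)"
    "(3-b) + a \<le> 3 + (3-c)" "(3-c) + (3-a) \<le> 3 + (3-b)"
  defines "g \<equiv> \<lambda>x::nat. if 2 \<le> x then 1 else (0::int)"
  defines "m1 \<equiv> max (3-a) (3-b)" and "m2 \<equiv> max a (3-c)" and "m3 \<equiv> max b c"
  defines "s1 \<equiv> g a + g b - g (3-a) - g (3-b)" and "s2 \<equiv> g (3-a) + g c - g a - g (3-c)"
    and "s3 \<equiv> g (3-b) + g (3-c) - g b - g c"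
  shows "(m1 \<le> m1 \<and> m1 \<le> m2 \<and> m1 \<le> m3 \<longleftrightarrow> s1 \<le> s1 \<and> s2 \<le> s1 \<and> s3 \<le> s1) \<and>
         (m2 \<le> m1 \<and> m2 \<le> m2 \<and> m2 \<le> m3 \<longleftrightarrow> s1 \<le> s2 \<and> s2 \<le> s2 \<and> s3 \<le> s2) \<and>
         (m3 \<le> m1 \<and> m3 \<le> m2 \<and> m3 \<le> m3 \<longleftrightarrow> s1 \<le> s3 \<and> s2 \<le> s3 \<and> s3 \<le> s3)"
proof -
  have A: "a = 0 \<or> a = 1 \<or> a = 2 \<or> a = 3" using assms(1) by auto
  have B: "b = 0 \<or> b = 1 \<or> b = 2 \<or> b = 3" using assms(2) by auto
  have C: "c = 0 \<or> c = 1 \<or> c = 2 \<or> c = 3" using assms(3) by auto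
  show ?thesis using A B C assms(4-9) unfolding g_def m1_def m2_def m3_def s1_def s2_def s3_def
    by (elim disjE) simp_all
qed

lemma case_33:
  assumes p: "p \<in> profiles 3 3"
  shows "Minimax 3 3 p = Copeland 3 3 p"
proof -
  define V where "V = votes 3 p"
  have in3: "(1::nat) \<in> {1..3}" "(2::nat) \<in> {1..3}" "(3::nat) \<in> {1..3}" by auto
  have s21: "V 2 1 = 3 - V 1 2" using votes_sum[OF p in3(1) in3(2)] unfolding V_def by simp
  have s31: "V 3 1 = 3 - V 1 3" using votes_sum[OF p in3(1) in3(3)] unfolding V_def by simp
  have s32: "V 3 2 = 3 - V 2 3" using votes_sum[OF p in3(2) in3(3)] unfolding V_def by simp
  have le: "V 1 2 \<le> 3" "V 1 3 \<le> 3" "V 2 3 \<le> 3" unfolding V_def using votes_le by auto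
  have t: "V x y + V y z \<le> 3 + V x z" if "x \<in> {1..3}" "y \<in> {1..3}" "z \<in> {1..3}" "x \<noteq> z" for x y z
    using votes_trans[OF p that] unfolding V_def by simp
  have t123: "V 1 2 + V 2 3 \<le> 3 + V 1 3" using t[OF in3(1) in3(2) in3(3)] by simp
  have t132: "V 1 3 + V 3 2 \<le> 3 + V 1 2" using t[OF in3(1) in3(3) in3(2)] by simp
  have t213: "V 2 1 + V 1 3 \<le> 3 + V 2 3" using t[OF in3(2) in3(1) in3(3)] by simp
  have t231: "V 2 3 + V 3 1 \<le> 3 + V 2 1" using t[OF in3(2) in3(3) in3(1)] by simp
  have t312: "V 3 1 + V 1 2 \<le> 3 + V 3 2" using t[OF in3(3) in3(1) in3(2)] by simp
  have t321: "V 3 2 + V 2 1 \<le> 3 + V 3 1" using t[OF in3(3) in3(2) in3(1)] by simp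
  have ms1: "minimax_score 3 3 p 1 = max (V 2 1) (V 3 1)"
  proof -
    have "{votes 3 p y 1 | y. y \<in> {1..3} \<and> y \<noteq> 1} = {V 2 1, V 3 1}" unfolding set3 V_def by auto
    then show ?thesis unfolding minimax_score_def by simp
  qed
  have ms2: "minimax_score 3 3 p 2 = max (V 1 2) (V 3 2)"
  proof -
    have "{votes 3 p y 2 | y. y \<in> {1..3} \<and> y \<noteq> 2} = {V 1 2, V 3 2}" unfolding set3 V_def by auto
    then show ?thesis unfolding minimax_score_def by simp
  qed
  have ms3: "minimax_score 3 3 p 3 = max (V 1 3) (V 2 3)"
  proof -
    have "{votes 3 p y 3 | y. y \<in> {1..3} \<and> y \<noteq> 3} = {V 1 3, V 2 3}" unfolding set3 V_def by auto
    then show ?thesis unfolding minimax_score_def by simp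
  qed
  have mj: "maj 3 p x y \<longleftrightarrow> 2 \<le> V x y" for x y
  proof -
    have "mu0 3 = 2" unfolding mu0_eq by simp
    then show ?thesis unfolding maj_def V_def by simp
  qed
  have cs: "copeland_score 3 3 p x = (if maj 3 p x 1 then 1 else 0) + (if maj 3 p x 2 then 1 else 0) + (if maj 3 p x 3 then 1 else 0)
     - ((if maj 3 p 1 x then 1 else 0) + (if maj 3 p 2 x then 1 else 0) + (if maj 3 p 3 x then 1 else 0))" for x
    unfolding copeland_score_def card_upto3 by simp
  define g where "g \<equiv> \<lambda>x::nat. if 2 \<le> x then 1 else (0::int)"
  have cs1: "copeland_score 3 3 p 1 = g (V 1 2) + g (V 1 3) - g (3 - V 1 2) - g (3 - V 1 3)"
    unfolding cs mj g_def s21[symmetric] s31[symmetric] using maj_irrefl mj by simp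
  have cs2: "copeland_score 3 3 p 2 = g (3 - V 1 2) + g (V 2 3) - g (V 1 2) - g (3 - V 2 3)"
    unfolding cs mj g_def s21[symmetric] s32[symmetric] using maj_irrefl mj by simp
  have cs3: "copeland_score 3 3 p 3 = g (3 - V 1 3) + g (3 - V 2 3) - g (V 1 3) - g (V 2 3)"
    unfolding cs mj g_def s31[symmetric] s32[symmetric] using maj_irrefl mj by simp
  have ms1': "minimax_score 3 3 p 1 = max (3 - V 1 2) (3 - V 1 3)" using ms1 s21 s31 by simp
  have ms2': "minimax_score 3 3 p 2 = max (V 1 2) (3 - V 2 3)" using ms2 s32 by simp
  have ms3': "minimax_score 3 3 p 3 = max (V 1 3) (V 2 3)" using ms3 by simp
  have key: "(minimax_score 3 3 p 1 \<le> minimax_score 3 3 p 1 \<and> minimax_score 3 3 p 1 \<le> minimax_score 3 3 p 2 \<and> minimax_score 3 3 p 1 \<le> minimax_score 3 3 p 3 \<longleftrightarrow> copeland_score 3 3 p 1 \<le> copeland_score 3 3 p 1 \<and> copeland_score 3 3 p 2 \<le> copeland_score 3 3 p 1 \<and> copeland_score 3 3 p 3 \<le> copeland_score 3 3 p 1) \<and> (minimax_score 3 3 p 2 \<le> minimax_score 3 3 p 1 \<and> minimax_score 3 3 p 2 \<le> minimax_score 3 3 p 2 \<and> minimax_score 3 3 p 2 \<le> minimax_score 3 3 p 3 \<longleftrightarrow> copeland_score 3 3 p 1 \<le> copeland_score 3 3 p 2 \<and> copeland_score 3 3 p 2 \<le> copeland_score 3 3 p 2 \<and> copeland_score 3 3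 p 3 \<le> copeland_score 3 3 p 2) \<and> (minimax_score 3 3 p 3 \<le> minimax_score 3 3 p 1 \<and> minimax_score 3 3 p 3 \<le> minimax_score 3 3 p 2 \<and> minimax_score 3 3 p 3 \<le> minimax_score 3 3 p 3 \<longleftrightarrow> copeland_score 3 3 p 1 \<le> copeland_score 3 3 p 3 \<and> copeland_score 3 3 p 2 \<le> copeland_score 3 3 p 3 \<and> copeland_score 3 3 p 3 \<le> copeland_score 3 3 p 3)"
    unfolding ms1' ms2' ms3' cs1 cs2 cs3 g_def
    by (rule arith33[OF le t123 t132[unfolded s32] t213[unfolded s21] t231[unfolded s31 s21]
      t312[unfolded s31 s32] t321[unfolded s32 s21 s31]])
  have M: "Minimax 3 3 p = {x\<in>{1,2,3}. minimax_score 3 3 p x \<le> minimax_score 3 3 p 1 \<and> minimax_score 3 3 p x \<le> minimax_score 3 3 p 2 \<and> minimax_score 3 3 p x \<le> minimax_score 3 3 p 3}"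
    unfolding Minimax_def set3 by auto
  have C: "Copeland 3 3 p = {x\<in>{1,2,3}. copeland_score 3 3 p 1 \<le> copeland_score 3 3 p x \<and> copeland_score 3 3 p 2 \<le> copeland_score 3 3 p x \<and> copeland_score 3 3 p 3 \<le> copeland_score 3 3 p x}"
    unfolding Copeland_def set3 by auto
  show ?thesis unfolding M C using key by auto
qed

definition rB :: "nat \<Rightarrow> nat" where
  "rB x = (if x = 1 then 3 else if x = 2 then 1 else if x = 3 then 2 else x)"
definition rC :: "nat \<Rightarrow> nat" where
  "rC x = (if x = 1 then 2 else if x = 2 then 3 else if x = 3 then 1 else x)"
definition rD :: "nat \<Rightarrow> nat" where
  "rD x = (if x = 1 then 3 else if x = 2 then 4 else if x = 3 then 2 else if x = 4 then 1 else x)"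

lemma inj_rB: "inj rB" unfolding inj_def rB_def by (auto split: if_splits)
lemma inj_rC: "inj rC" unfolding inj_def rC_def by (auto split: if_splits)
lemma inj_rD: "inj rD" unfolding inj_def rD_def by (auto split: if_splits)
lemma inj_id': "inj (\<lambda>x::nat. x)" by (simp add: inj_def)

lemma cex1:
  assumes n: "n \<ge> 3" and h: "h \<ge> 2" "h \<noteq> 3"
  shows "\<exists>p\<in>profiles n h. Minimax n h p \<noteq> Copeland n h p"
proof -
  define k where "k = h div 2"
  define m where "m = h - k"
  define p where "p = prof n (R k m (\<lambda>x. x) rB rC)"
  have km: "k \<le> m" "m \<le> h" unfolding m_def k_def by auto
  have hk: "h - m = k" unfolding m_def k_def by auto
  have k1: "k \<ge> 1" using h unfolding k_def by auto
  have hk1: "k + 1 \<le> h" using h unfolding k_def by auto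
  have P: "p \<in> profiles n h" unfolding p_def by (rule prof_in[OF R_inj[OF inj_id' inj_rB inj_rC]])
  have V: "votes h p x y = (if x < y then k else 0) + (if rB x < rB y then m-k else 0) + (if rC x < rC y then k else 0)"
    if "x \<in> {1..n}" "y \<in> {1..n}" for x y
    using votes_R[OF inj_id' inj_rB inj_rC km that] hk unfolding p_def by simp
  have in3: "(1::nat) \<in> {1..n}" "(2::nat) \<in> {1..n}" "(3::nat) \<in> {1..n}" using n by auto
  have v12: "votes h p 1 2 = 2*k" using V[OF in3(1) in3(2)] by (simp add: rB_def rC_def)
  have v21: "votes h p 2 1 = m - k" using V[OF in3(2) in3(1)] by (simp add: rB_def rC_def)
  have v13: "votes h p 1 3 = k" using V[OF in3(1) in3(3)] by (simp add: rB_def rC_def)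
  have v31: "votes h p 3 1 = m" using V[OF in3(3) in3(1)] km by (simp add: rB_def rC_def)
  have v23: "votes h p 2 3 = m" using V[OF in3(2) in3(3)] km by (simp add: rB_def rC_def)
  have v32: "votes h p 3 2 = k" using V[OF in3(3) in3(2)] by (simp add: rB_def rC_def)
  have vxe: "votes h p x e = h" if "x \<in> {1,2,3}" "e \<in> {1..n}" "e \<ge> 4" for x e
  proof -
    have "x \<in> {1..n}" using that n by auto
    then show ?thesis using V[OF _ that(2)] that km hk by (auto simp: rB_def rC_def)
  qed
  have vex: "votes h p e x = 0" if "x \<in> {1,2,3}" "e \<in> {1..n}" "e \<ge> 4" for x e
  proof -
    have "x \<in> {1..n}" using that n by auto
    then show ?thesis using V[OF that(2)] that by (auto simp: rB_def rC_def)
  qed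
  have mu: "mu0 h = k + 1" unfolding mu0_eq k_def by simp
  have majI: "maj h p x y" if "votes h p x y \<ge> k + 1" for x y using that mu unfolding maj_def by simp
  have majN: "\<not> maj h p x y" if "votes h p x y < k + 1" for x y using that mu unfolding maj_def by simp
  show ?thesis
  proof (cases "even h")
    case False
    then have mk: "m = k + 1" unfolding m_def k_def by presburger
    have k2: "k \<ge> 2" using h False unfolding k_def by presburger
    have notM: "2 \<notin> Minimax n h p"
    proof
      assume "2 \<in> Minimax n h p"
      then have "minimax_score n h p 2 \<le> minimax_score n h p 1" unfolding Minimax_def using in3 by auto
      moreover have "minimax_score n h p 1 \<le> k + 1"
      proof (rule mm_upper[OF in3(1)])
        show "2 \<le> n" using n by simp
        fix y assume y: "y \<in> {1..n}" "y \<noteq> 1"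
        show "votes h p y 1 \<le> k + 1"
        proof (cases "y \<ge> 4")
          case True then show ?thesis using vex[of 1 y] y by simp
        next
          case False
          then have "y = 2 \<or> y = 3" using y by auto
          then show ?thesis using v21 v31 mk by auto
        qed
      qed
      moreover have "2 * k \<le> minimax_score n h p 2" using mm_lower[OF in3(1), of 2 h p] v12 by simp
      ultimately show False using k2 by simp
    qed
    have inC: "2 \<in> Copeland n h p"
    proof -
      have low: "copeland_score n h p 2 \<ge> int n - 1 - 1 - 1"
        using cop_lower[OF P in3(2), of "{1}" "{1}"] in3
      proof -
        have "copeland_score n h p 2 \<ge> int n - 1 - int (card {1::nat}) - int (card {1::nat})"
        proof (rule cop_lower[OF P in3(2)])
          show "{1} \<subseteq> {1..n}" using in3 by auto
          fix y assume y: "y \<in> {1..n}" "y \<noteq> 2" "y \<notin> {1}"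
          show "maj h p 2 y"
          proof (cases "y \<ge> 4")
            case True then show ?thesis using vxe[of 2 y] y majI hk1 by simp
          next
            case False
            then have "y = 3" using y by auto
            then show ?thesis using v23 mk majI by simp
          qed
        qed auto
        then show ?thesis by simp
      qed
      have up: "copeland_score n h p z \<le> copeland_score n h p 2" if z: "z \<in> {1..n}" for z
      proof -
        have "z = 1 \<or> z = 2 \<or> z = 3 \<or> z \<ge> 4" using z by auto
        then consider "z = 1" | "z = 2" | "z = 3" | "z \<ge> 4" by blast
        then show ?thesis
        proof cases
          case 1
          have "copeland_score n h p z \<le> int n - 1 - int (card ({}::nat set)) - 2 * int (card {3::nat})"
            by (rule cop_upper[OF P z]) (use in3 1 v31 mk majI in auto)
          then show ?thesis using low by simp
        next
          case 2 then show ?thesis by simp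
        next
          case 3
          have "copeland_score n h p z \<le> int n - 1 - int (card ({}::nat set)) - 2 * int (card {2::nat})"
            by (rule cop_upper[OF P z]) (use in3 3 v23 mk majI in auto)
          then show ?thesis using low by simp
        next
          case 4
          have "copeland_score n h p z \<le> int n - 1 - int (card ({}::nat set)) - 2 * int (card {1::nat,2,3})"
          proof (rule cop_upper[OF P z])
            fix a assume "a \<in> {1::nat,2,3}"
            then show "maj h p a z" using vxe[OF _ z 4] majI hk1 by auto
          qed (use in3 4 in auto)
          then show ?thesis using low by simp
        qed
      qed
      show ?thesis unfolding Copeland_def using in3 up by auto
    qed
    show ?thesis using P notM inC by blast
  next
    case True
    then have mk: "m = k" unfolding m_def k_def by presburger
    have inM: "3 \<in> Minimax n h p"
    proof -
      have up: "minimax_score n h p 3 \<le> k"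
      proof (rule mm_upper[OF in3(3)])
        show "2 \<le> n" using n by simp
        fix y assume y: "y \<in> {1..n}" "y \<noteq> 3"
        show "votes h p y 3 \<le> k"
        proof (cases "y \<ge> 4")
          case True then show ?thesis using vex[of 3 y] y by simp
        next
          case False
          then have "y = 1 \<or> y = 2" using y by auto
          then show ?thesis using v13 v23 mk by auto
        qed
      qed
      have "k \<le> minimax_score n h p z" if z: "z \<in> {1..n}" for z
      proof -
        have "z = 1 \<or> z = 2 \<or> z = 3 \<or> z \<ge> 4" using z by auto
        then consider "z = 1" | "z = 2" | "z = 3" | "z \<ge> 4" by blast
        then show ?thesis
        proof cases
          case 1 then show ?thesis using mm_lower[OF in3(3), of z h p] v31 mk by simp
        next
          case 2 then show ?thesis using mm_lower[OF in3(1), of z h p] v12 by simp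
        next
          case 3 then show ?thesis using up mm_lower[OF in3(1), of z h p] v13 by simp
        next
          case 4 then show ?thesis using mm_lower[OF in3(1), of z h p] vxe[of 1 z] z hk1 by simp
        qed
      qed
      then show ?thesis unfolding Minimax_def using in3 up by force
    qed
    have notC: "3 \<notin> Copeland n h p"
    proof
      assume "3 \<in> Copeland n h p"
      then have c: "copeland_score n h p 1 \<le> copeland_score n h p 3" unfolding Copeland_def using in3 by auto
      have "copeland_score n h p 3 \<le> int n - 1 - int (card {1::nat,2}) - 2 * int (card ({}::nat set))"
        by (rule cop_upper[OF P in3(3)]) (use in3 v31 v32 mk majN in auto)
      moreover have "copeland_score n h p 1 \<ge> int n - 1 - int (card {3::nat}) - int (card ({}::nat set))"
      proof (rule cop_lower[OF P in3(1)])
        fix y assume y: "y \<in> {1..n}" "y \<noteq> 1" "y \<notin> {3}"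
        show "maj h p 1 y"
        proof (cases "y \<ge> 4")
          case True then show ?thesis using vxe[of 1 y] y majI hk1 by simp
        next
          case False
          then have "y = 2" using y by auto
          then show ?thesis using v12 k1 majI by simp
        qed
      next
        fix y assume "y \<in> {3::nat}" "y \<notin> {}"
        then show "\<not> maj h p y 1" using v31 mk majN by simp
      qed (use in3 in auto)
      ultimately show False using c by simp
    qed
    show ?thesis using P inM notC by blast
  qed
qed

lemma cex2:
  assumes n: "n \<ge> 4"
  shows "\<exists>p\<in>profiles n 3. Minimax n 3 p \<noteq> Copeland n 3 p"
proof -
  define p where "p = prof n (R 1 2 (\<lambda>x. x) rB rD)"
  have P: "p \<in> profiles n 3" unfolding p_def by (rule prof_in[OF R_inj[OF inj_id' inj_rB inj_rD]])
  have V: "votes 3 p x y = (if x < y then 1 else 0) + (if rB x < rB y then 1 else 0) + (if rD x < rD y then 1 else 0)"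
    if "x \<in> {1..n}" "y \<in> {1..n}" for x y
    using votes_R[OF inj_id' inj_rB inj_rD _ _ that, of 1 2 3] unfolding p_def by simp
  have in4: "(1::nat) \<in> {1..n}" "(2::nat) \<in> {1..n}" "(3::nat) \<in> {1..n}" "(4::nat) \<in> {1..n}" using n by auto
  have v12: "votes 3 p 1 2 = 2" using V[OF in4(1) in4(2)] by (simp add: rB_def rD_def)
  have v31: "votes 3 p 3 1 = 2" using V[OF in4(3) in4(1)] by (simp add: rB_def rD_def)
  have v23: "votes 3 p 2 3 = 2" using V[OF in4(2) in4(3)] by (simp add: rB_def rD_def)
  have v14: "votes 3 p 1 4 = 2" using V[OF in4(1) in4(4)] by (simp add: rB_def rD_def)
  have v24: "votes 3 p 2 4 = 2" using V[OF in4(2) in4(4)] by (simp add: rB_def rD_def)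
  have v34: "votes 3 p 3 4 = 2" using V[OF in4(3) in4(4)] by (simp add: rB_def rD_def)
  have vxe: "votes 3 p x e = 3" if "x \<in> {1,2,3,4}" "e \<in> {1..n}" "e \<ge> 5" for x e
  proof -
    have "x \<in> {1..n}" using that n by auto
    then show ?thesis using V[OF _ that(2)] that by (auto simp: rB_def rD_def)
  qed
  have vex: "votes 3 p e x = 0" if "x \<in> {1,2,3,4}" "e \<in> {1..n}" "e \<ge> 5" for x e
  proof -
    have "x \<in> {1..n}" using that n by auto
    then show ?thesis using V[OF that(2)] that by (auto simp: rB_def rD_def)
  qed
  have mu: "mu0 3 = 2" unfolding mu0_eq by simp
  have majI: "maj 3 p x y" if "votes 3 p x y \<ge> 2" for x y using that mu unfolding maj_def by simp
  have inM: "4 \<in> Minimax n 3 p"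
  proof -
    have up: "minimax_score n 3 p 4 \<le> 2"
    proof (rule mm_upper[OF in4(4)])
      show "2 \<le> n" using n by simp
      fix y assume y: "y \<in> {1..n}" "y \<noteq> 4"
      show "votes 3 p y 4 \<le> 2"
      proof (cases "y \<ge> 5")
        case True then show ?thesis using vex[of 4 y] y by simp
      next
        case False
        then have "y = 1 \<or> y = 2 \<or> y = 3" using y by auto
        then show ?thesis using v14 v24 v34 by auto
      qed
    qed
    have "2 \<le> minimax_score n 3 p z" if z: "z \<in> {1..n}" for z
    proof -
      have "z = 1 \<or> z = 2 \<or> z = 3 \<or> z = 4 \<or> z \<ge> 5" using z by auto
      then consider "z = 1" | "z = 2" | "z = 3" | "z = 4" | "z \<ge> 5" by blast
      then show ?thesis
      proof cases
        case 1 then show ?thesis using mm_lower[OF in4(3), of z 3 p] v31 by simp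
      next
        case 2 then show ?thesis using mm_lower[OF in4(1), of z 3 p] v12 by simp
      next
        case 3 then show ?thesis using mm_lower[OF in4(2), of z 3 p] v23 by simp
      next
        case 4 then show ?thesis using mm_lower[OF in4(1), of z 3 p] v14 by simp
      next
        case 5 then show ?thesis using mm_lower[OF in4(1), of z 3 p] vxe[of 1 z] z by simp
      qed
    qed
    then show ?thesis unfolding Minimax_def using in4 up by force
  qed
  have notC: "4 \<notin> Copeland n 3 p"
  proof
    assume "4 \<in> Copeland n 3 p"
    then have c: "copeland_score n 3 p 1 \<le> copeland_score n 3 p 4" unfolding Copeland_def using in4 by auto
    have "copeland_score n 3 p 4 \<le> int n - 1 - int (card ({}::nat set)) - 2 * int (card {1::nat,2,3})"
      by (rule cop_upper[OF P in4(4)]) (use in4 v14 v24 v34 majI in auto)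
    moreover have "copeland_score n 3 p 1 \<ge> int n - 1 - int (card {3::nat}) - int (card {3::nat})"
    proof (rule cop_lower[OF P in4(1)])
      fix y assume y: "y \<in> {1..n}" "y \<noteq> 1" "y \<notin> {3}"
      show "maj 3 p 1 y"
      proof (cases "y \<ge> 5")
        case True then show ?thesis using vxe[of 1 y] y majI by simp
      next
        case False
        then have "y = 2 \<or> y = 4" using y by auto
        then show ?thesis using v12 v14 majI by auto
      qed
    qed (use in4 in auto)
    ultimately show False using c by simp
  qed
  show ?thesis using P inM notC by blast
qed

theorem corollary2:
  fixes n h :: nat
  assumes "n \<ge> 2" and "h \<ge> 2"
  shows "(\<forall>p\<in>profiles n h. Minimax n h p = Copeland n h p) \<longleftrightarrow> (n = 2 \<or> (h, n) = (3, 3))"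
proof
  assume H: "\<forall>p\<in>profiles n h. Minimax n h p = Copeland n h p"
  show "n = 2 \<or> (h, n) = (3, 3)"
  proof (rule ccontr)
    assume nc: "\<not> (n = 2 \<or> (h, n) = (3, 3))"
    then have n3: "n \<ge> 3" using assms by auto
    show False
    proof (cases "h = 3")
      case True
      then have "n \<ge> 4" using nc n3 by auto
      then show False using cex2 H True by blast
    next
      case False
      then show False using cex1[OF n3 assms(2) False] H by blast
    qed
  qed
next
  assume "n = 2 \<or> (h, n) = (3, 3)"
  then show "\<forall>p\<in>profiles n h. Minimax n h p = Copeland n h p"
    using case_n2 case_33 by auto
qed

end
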